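(* Let $k=3$, $\lambda>0$ and $0<\theta<1$. Put $\theta_c(3)=1/2$ and, for $\theta<1/2$, $\lambda_{\rm cr}(3)=\frac{1}{2-4\theta}\bigl(\frac43\bigr)^3$. Then: (1) if $\theta\ge1/2$, there is exactly one TISGM; (2) if $\theta<1/2$: (2a) if $\lambda\le\lambda_{\rm cr}(3)$ there is exactly one TISGM (corresponding to the solution $(x^*,x^* )$); (2b) if $\lambda>\lambda_{\rm cr}(3)$ there are exactly three TISGMs, corresponding to $(x^*,x^* )$ and two solutions $(x_1^*,x_2^* )$, $(x_2^*,x_1^* )$ with $x_1^*\ne x_2^*$.
   Context: SCWR model on the Cayley tree of order $k$ (each vertex has $k$ direct successors), spins in $\{-1,0,1\}$, activity $\lambda>0$, $\theta=e^{-J\beta}$; ferromagnetic means $0<\theta<1$. TISGMs are in one-to-one correspondence with the solutions $(x,y)\in(0,\infty)^2$ of $x=\lambda\bigl(\frac{1+x+\theta y}{1+x+y}\bigr)^k$, $y=\lambda\bigl(\frac{1+\theta x+y}{1+x+y}\bigr)^k$; the number of TISGMs is the number of such solutions. $x^*$ is the unique positive solution of $x=\lambda\bigl(\frac{1+(1+\theta)x}{1+2x}\bigr)^k$. *)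

theory Defs
  imports Complex_Main
begin

text \<open>Positive solutions (x,y) of the fixed-point system; these are in one-to-one
correspondence with the TISGMs of the SCWR model on the Cayley tree of order k.\<close>
definition scwr_solutions :: "nat \<Rightarrow> real \<Rightarrow> real \<Rightarrow> (real \<times> real) set" where
  "scwr_solutions k lam th = {(x, y). x > 0 \<and> y > 0 \<and>
      x = lam * ((1 + x + th * y) / (1 + x + y)) ^ k \<and>
      y = lam * ((1 + th * x + y) / (1 + x + y)) ^ k}"

definition num_TISGM :: "nat \<Rightarrow> real \<Rightarrow> real \<Rightarrow> nat" where
  "num_TISGM k lam th = card (scwr_solutions k lam th)"

definition x_star :: "nat \<Rightarrow> real \<Rightarrow> real \<Rightarrow> real" where
  "x_star k lam th = (THE x. x > 0 \<and> x = lam * ((1 + (1 + th) * x) / (1 + 2 * x)) ^ k)"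

definition lambda_cr3 :: "real \<Rightarrow> real" where
  "lambda_cr3 th = 1 / (2 - 4 * th) * (4 / 3) ^ 3"

end

theory Submission imports Defs begin

lemma core_fwd:
  fixes u v L th :: real
  assumes "u>0" "v>0" "u\<noteq>v" "L>0" "th>0" "th<1"
   and e1: "u*(1+u^3+v^3) = L*(1+u^3+th*v^3)" and e2: "v*(1+u^3+v^3) = L*(1+th*u^3+v^3)"
  shows "(1+2*th)*(u+v)*(u*v) = 1+th*(u+v)^3 \<and> L*((1+th)*(u+v)^3-1) = (u+v)*((u+v)^3-2)"
proof -
  define s where "s = 1+u^3+v^3"
  have "(u-v)*s = (u-v)*(L*(1-th)*(u^2+u*v+v^2))"
    using e1 e2 unfolding s_def by algebra
  hence hs: "s = L*(1-th)*(u^2+u*v+v^2)" using assms(3) by simp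
  have "(u+v)*s = L*(2+(1+th)*(u^3+v^3))" using e1 e2 unfolding s_def by algebra
  hence "L*((u+v)*(1-th)*(u^2+u*v+v^2)) = L*(2+(1+th)*(u^3+v^3))" using hs by algebra
  hence h2: "(u+v)*(1-th)*(u^2+u*v+v^2) = 2+(1+th)*(u^3+v^3)" using assms(4) by simp
  have r1: "(1+2*th)*(u+v)*(u*v) = 1+th*(u+v)^3" using h2 by algebra
  have a: "(1+2*th)*(u+v)*s = (u+v)*(1-th)*((u+v)^3-2)" using r1 unfolding s_def by algebra
  have b: "(1+2*th)*(u+v)*s = L*(1-th)*((1+th)*(u+v)^3-1)" using r1 hs by algebra
  have "(1-th)*(L*((1+th)*(u+v)^3-1)) = (1-th)*((u+v)*((u+v)^3-2))" using a b by algebra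
  hence "L*((1+th)*(u+v)^3-1) = (u+v)*((u+v)^3-2)" using assms(6) by simp
  with r1 show ?thesis by simp
qed

lemma core_bwd:
  fixes u v L th :: real
  assumes "u>0" "v>0" "th>0" "th<1"
   and r1: "(1+2*th)*(u+v)*(u*v) = 1+th*(u+v)^3" and r2: "L*((1+th)*(u+v)^3-1) = (u+v)*((u+v)^3-2)"
  shows "u*(1+u^3+v^3) = L*(1+u^3+th*v^3) \<and> v*(1+u^3+v^3) = L*(1+th*u^3+v^3)"
proof -
  define s where "s = 1+u^3+v^3"
  have a: "(1+2*th)*(u+v)*s = (u+v)*(1-th)*((u+v)^3-2)" using r1 unfolding s_def by algebra
  have "(1+2*th)*(u+v)*(L*(1-th)*(u^2+u*v+v^2)) = L*(1-th)*((1+th)*(u+v)^3-1)" using r1 by algebra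
  also have "\<dots> = (1-th)*((u+v)*((u+v)^3-2))" using r2 by algebra
  finally have "((1+2*th)*(u+v))*(L*(1-th)*(u^2+u*v+v^2)) = ((1+2*th)*(u+v))*s" using a by algebra
  moreover have "(1+2*th)*(u+v) \<noteq> 0" using assms by (smt (verit) mult_pos_pos)
  ultimately have hs: "s = L*(1-th)*(u^2+u*v+v^2)" by simp
  have d: "u*s - L*(1+u^3+th*v^3) - (v*s - L*(1+th*u^3+v^3)) = 0" using hs by algebra
  have sm: "u*s - L*(1+u^3+th*v^3) + (v*s - L*(1+th*u^3+v^3)) = 0" using hs r1 by algebra
  from d sm show ?thesis unfolding s_def by linarith
qed

lemma cube_eq_pos: "(a::real) \<ge> 0 \<Longrightarrow> b \<ge> 0 \<Longrightarrow> a^3 = b^3 \<longleftrightarrow> a = b"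
  by (simp add: power_eq_iff_eq_base)

lemma sol_uv:
  fixes u v lam th :: real
  assumes "lam>0" "u>0" "v>0" "th>0"
  shows "(u^3,v^3) \<in> scwr_solutions 3 lam th \<longleftrightarrow>
     (u*(1+u^3+v^3) = root 3 lam*(1+u^3+th*v^3) \<and> v*(1+u^3+v^3) = root 3 lam*(1+th*u^3+v^3))"
proof -
  define L where "L = root 3 lam"
  have L: "L > 0" "L^3 = lam" using assms unfolding L_def by (auto simp: real_root_pow_pos)
  define s where "s = 1+u^3+v^3"
  have "u^3>0" "v^3>0" using assms by simp_all
  hence s: "s > 0" unfolding s_def by linarith
  have A: "L*(1+u^3+th*v^3)/s \<ge> 0" using assms L s by simp
  have B: "L*(1+th*u^3+v^3)/s \<ge> 0" using assms L s by simp
  have "u^3 = lam*((1+u^3+th*v^3)/s)^3 \<longleftrightarrow> u^3 = (L*(1+u^3+th*v^3)/s)^3"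
    using L by (simp add: power_mult_distrib power_divide)
  also have "\<dots> \<longleftrightarrow> u = L*(1+u^3+th*v^3)/s" using cube_eq_pos[OF _ A, of u] assms by simp
  also have "\<dots> \<longleftrightarrow> u*s = L*(1+u^3+th*v^3)" using s by (simp add: field_simps)
  finally have 1: "u^3 = lam*((1+u^3+th*v^3)/s)^3 \<longleftrightarrow> u*s = L*(1+u^3+th*v^3)" .
  have "v^3 = lam*((1+th*u^3+v^3)/s)^3 \<longleftrightarrow> v^3 = (L*(1+th*u^3+v^3)/s)^3"
    using L by (simp add: power_mult_distrib power_divide)
  also have "\<dots> \<longleftrightarrow> v = L*(1+th*u^3+v^3)/s" using cube_eq_pos[OF _ B, of v] assms by simp
  also have "\<dots> \<longleftrightarrow> v*s = L*(1+th*u^3+v^3)" using s by (simp add: field_simps)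
  finally have 2: "v^3 = lam*((1+th*u^3+v^3)/s)^3 \<longleftrightarrow> v*s = L*(1+th*u^3+v^3)" .
  show ?thesis using 1 2 assms unfolding scwr_solutions_def s_def L_def by simp
qed

lemma sym_sol: "(x,x) \<in> scwr_solutions 3 lam th \<longleftrightarrow> x>0 \<and> x = lam*((1+(1+th)*x)/(1+2*x))^3"
proof -
  have e: "1+x+th*x = 1+(1+th)*x" "1+th*x+x = 1+(1+th)*x" "1+x+x = 1+2*x" by algebra+
  show ?thesis unfolding scwr_solutions_def mem_Collect_eq prod.case e by auto
qed

lemma r_dec:
  fixes th x1 x2 :: real
  assumes "0\<le>x1" "x1<x2" "0<th" "th<1"
  shows "(1+(1+th)*x2)/(1+2*x2) < (1+(1+th)*x1)/(1+2*x1)"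
proof -
  have "(1+(1+th)*x2)*(1+2*x1) < (1+(1+th)*x1)*(1+2*x2)"
  proof -
    have "(1+(1+th)*x1)*(1+2*x2) - (1+(1+th)*x2)*(1+2*x1) = (1-th)*(x2-x1)" by algebra
    moreover have "(1-th)*(x2-x1) > 0" using assms by simp
    ultimately show ?thesis by linarith
  qed
  thus ?thesis using assms by (simp add: divide_simps)
qed

lemma sym_unique:
  fixes lam th x1 x2 :: real
  assumes "lam>0" "0<th" "th<1" "x1>0" "x2>0"
    "x1 = lam*((1+(1+th)*x1)/(1+2*x1))^3" "x2 = lam*((1+(1+th)*x2)/(1+2*x2))^3"
  shows "x1 = x2"
proof -
  have *: False if "a>0" "a<b" "a = lam*((1+(1+th)*a)/(1+2*a))^3" "b = lam*((1+(1+th)*b)/(1+2*b))^3" for a b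
  proof -
    have "(1+(1+th)*b)/(1+2*b) < (1+(1+th)*a)/(1+2*a)" using r_dec[of a b th] that assms by simp
    moreover have "(1+(1+th)*b)/(1+2*b) \<ge> 0" using that assms by simp
    ultimately have "((1+(1+th)*b)/(1+2*b))^3 < ((1+(1+th)*a)/(1+2*a))^3"
      by (simp add: power_strict_mono)
    hence "b < a" using that assms(1) by (metis mult_less_cancel_left_pos)
    thus False using that by simp
  qed
  show ?thesis using *[of x1 x2] *[of x2 x1] assms by (cases x1 x2 rule: linorder_cases) auto
qed

lemma sym_exists:
  fixes lam th :: real
  assumes "lam>0" "0<th" "th<1"
  shows "\<exists>x>0. x = lam*((1+(1+th)*x)/(1+2*x))^3"
proof -
  define f where "f x = x - lam*((1+(1+th)*x)/(1+2*x))^3" for x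
  have c: "continuous_on {0..lam} f" unfolding f_def
    by (intro continuous_intros) (auto simp: add_pos_nonneg)
  have f0: "f 0 < 0" using assms unfolding f_def by simp
  have "(1+(1+th)*lam)/(1+2*lam) \<le> 1" using assms by (simp add: divide_simps)
  moreover have "(1+(1+th)*lam)/(1+2*lam) \<ge> 0" using assms by simp
  ultimately have "((1+(1+th)*lam)/(1+2*lam))^3 \<le> 1" by (simp add: power_le_one)
  hence "f lam \<ge> 0" using assms unfolding f_def
    by (metis diff_ge_0_iff_ge mult.right_neutral mult_left_mono less_imp_le)
  then obtain x where x: "0 \<le> x" "x \<le> lam" "f x = 0"
    using IVT'[of f 0 0 lam] f0 c assms by auto
  have "x \<noteq> 0" using x f0 by auto
  thus ?thesis using x unfolding f_def by (intro exI[of _ x]) auto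
qed

lemma x_star_prop:
  fixes lam th :: real
  assumes "lam>0" "0<th" "th<1"
  shows "x_star 3 lam th > 0 \<and> x_star 3 lam th = lam*((1+(1+th)*x_star 3 lam th)/(1+2*x_star 3 lam th))^3"
    and "x>0 \<Longrightarrow> x = lam*((1+(1+th)*x)/(1+2*x))^3 \<Longrightarrow> x = x_star 3 lam th"
proof -
  obtain a where a: "a>0" "a = lam*((1+(1+th)*a)/(1+2*a))^3" using sym_exists[OF assms] by blast
  have e: "x_star 3 lam th = a" unfolding x_star_def
    by (rule the_equality) (use a sym_unique[OF assms] in auto)
  show "x_star 3 lam th > 0 \<and> x_star 3 lam th = lam*((1+(1+th)*x_star 3 lam th)/(1+2*x_star 3 lam th))^3"
    using a e by simp
  show "x>0 \<Longrightarrow> x = lam*((1+(1+th)*x)/(1+2*x))^3 \<Longrightarrow> x = x_star 3 lam th"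
    using e a sym_unique[OF assms] by metis
qed

definition r2 :: "real \<Rightarrow> real \<Rightarrow> real" where
  "r2 th t = (t-2)/((1+th)*t-1)"

lemma t_big: fixes t th :: real assumes "t*(1-2*th) > 4" "th>0" "t>0" shows "t > 4"
proof -
  have "t*(1-2*th) \<le> t" using assms by (simp add: mult_left_le)
  thus ?thesis using assms by linarith
qed

lemma r2_pos: assumes "t > 2" "th>0" shows "r2 th t > 0" "(1+th)*t-1 > 0"
proof -
  have "(1+th)*t \<ge> t" using assms by (simp add: mult_right_mono)
  thus "(1+th)*t-1 > 0" using assms by linarith
  thus "r2 th t > 0" unfolding r2_def using assms by simp
qed

lemma r2_mono: assumes "2 < t1" "t1 < t2" "th > 0" shows "r2 th t1 < r2 th t2"
proof -
  have d1: "(1+th)*t1-1 > 0" and d2: "(1+th)*t2-1 > 0" using r2_pos assms by auto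
  have "(t2-2)*((1+th)*t1-1) - (t1-2)*((1+th)*t2-1) = (t2-t1)*(1+2*th)" by algebra
  moreover have "(t2-t1)*(1+2*th) > 0" using assms by simp
  ultimately have "(t1-2)*((1+th)*t2-1) < (t2-2)*((1+th)*t1-1)" by linarith
  thus ?thesis unfolding r2_def using d1 d2 by (simp add: divide_simps)
qed

lemma h_mono: assumes "2 < t1" "t1 < t2" "th > 0" shows "t1 * r2 th t1 ^ 3 < t2 * r2 th t2 ^ 3"
proof -
  have "r2 th t1 ^3 < r2 th t2 ^3" using r2_mono[OF assms] r2_pos[of t1 th] assms
    by (simp add: power_strict_mono)
  moreover have "r2 th t1 ^3 > 0" using r2_pos[of t1 th] assms by simp
  ultimately show ?thesis using assms by (simp add: mult_strict_mono)
qed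

lemma r2_crit: fixes t th :: real assumes "t*(1-2*th) > 4" "th>0" "th<1/2" "t>0" shows "r2 th t > 2/3"
proof -
  have t: "t > 4" using t_big assms by blast
  have d: "(1+th)*t-1 > 0" using r2_pos[of t th] t assms by simp
  have "3*(t-2) - 2*((1+th)*t-1) = t*(1-2*th) - 4" by algebra
  hence "2*((1+th)*t-1) < 3*(t-2)" using assms by linarith
  thus ?thesis unfolding r2_def using d by (simp add: divide_simps)
qed

lemma h_crit: fixes t th :: real assumes "t*(1-2*th) > 4" "th>0" "th<1/2" "t>0" shows "t * r2 th t ^ 3 > lambda_cr3 th"
proof -
  have t: "t > 4" using t_big assms by blast
  have "(2/3::real)^3 < r2 th t ^3" using r2_crit[OF assms] by (simp add: power_strict_mono)
  hence "t*(2/3)^3 < t * r2 th t ^3" using t by simp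
  moreover have "lambda_cr3 th < t*(2/3)^3"
  proof -
    have "1-2*th > 0" "2-4*th > 0" using assms by auto
    hence "lambda_cr3 th = 4/(1-2*th) * (8/27)" unfolding lambda_cr3_def by (simp add: field_simps)
    moreover have "4/(1-2*th) < t" using assms by (simp add: divide_simps mult.commute)
    hence "4/(1-2*th) * (8/27) < t*(8/27)" by (rule mult_strict_right_mono) simp
    moreover have "t*(2/3)^3 = t*(8/27)" by (simp add: power_divide)
    ultimately show ?thesis by linarith
  qed
  ultimately show ?thesis by linarith
qed

lemma fwd:
  fixes lam th x y :: real
  assumes "lam>0" "0<th" "th<1" "(x,y) \<in> scwr_solutions 3 lam th" "x \<noteq> y"
  shows "\<exists>p>0. p^3*(1-2*th) > 4 \<and> lam = p^3 * r2 th (p^3) ^ 3 \<and> root 3 x + root 3 y = p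
          \<and> (1+2*th)*p*(root 3 x * root 3 y) = 1 + th*p^3"
proof -
  have xy: "x>0" "y>0" using assms(4) unfolding scwr_solutions_def by auto
  define u where "u = root 3 x"
  define v where "v = root 3 y"
  have u: "u>0" "u^3 = x" using xy unfolding u_def by (auto simp: real_root_pow_pos)
  have v: "v>0" "v^3 = y" using xy unfolding v_def by (auto simp: real_root_pow_pos)
  have uv: "u \<noteq> v" using u v assms(5) by auto
  define L where "L = root 3 lam"
  have L: "L > 0" "L^3 = lam" using assms unfolding L_def by (auto simp: real_root_pow_pos)
  have "(u^3,v^3) \<in> scwr_solutions 3 lam th" using u v assms by simp
  hence e: "u*(1+u^3+v^3) = L*(1+u^3+th*v^3)" "v*(1+u^3+v^3) = L*(1+th*u^3+v^3)"
    using sol_uv[of lam u v th] assms u v unfolding L_def by auto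
  from core_fwd[OF u(1) v(1) uv L(1) assms(2,3) e]
  have c1: "(1+2*th)*(u+v)*(u*v) = 1+th*(u+v)^3" and c2: "L*((1+th)*(u+v)^3-1) = (u+v)*((u+v)^3-2)"
    by auto
  define p where "p = u+v"
  have p: "p > 0" using u v unfolding p_def by simp
  have "(1+2*th)*p*(p^2-4*(u*v)) = p^3*(1-2*th) - 4" using c1 unfolding p_def by algebra
  moreover have "p^2-4*(u*v) > 0"
  proof -
    have "p^2-4*(u*v) = (u-v)^2" unfolding p_def by algebra
    thus ?thesis using uv by simp
  qed
  moreover have "(1+2*th)*p > 0" using p assms by simp
  ultimately have big: "p^3*(1-2*th) > 4" by (smt (verit) mult_pos_pos)
  have t: "p^3 > 4" using t_big[OF big assms(2)] p by simp
  have d: "(1+th)*p^3-1 > 0" using r2_pos[of "p^3" th] t assms by simp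
  have "L = p * r2 th (p^3)" using c2 d unfolding r2_def p_def by (simp add: field_simps)
  hence "lam = p^3 * r2 th (p^3) ^ 3" using L by (simp add: power_mult_distrib)
  thus ?thesis using p big c1 unfolding p_def u_def v_def by auto
qed

lemma bwd:
  fixes lam th p :: real
  assumes "lam>0" "0<th" "th<1" "p>0" "p^3*(1-2*th) > 4" "lam = p^3 * r2 th (p^3) ^ 3"
  shows "\<exists>u v. u>0 \<and> v>0 \<and> u \<noteq> v \<and> u+v = p \<and> (1+2*th)*p*(u*v) = 1+th*p^3
     \<and> (u^3,v^3) \<in> scwr_solutions 3 lam th \<and> (v^3,u^3) \<in> scwr_solutions 3 lam th"
proof -
  have t: "p^3 > 4" using t_big[of "p^3" th] assms by simp
  have d: "(1+th)*p^3-1 > 0" using r2_pos[of "p^3" th] t assms by simp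
  have rp: "r2 th (p^3) > 0" using r2_pos[of "p^3" th] t assms by simp
  define q where "q = (1+th*p^3)/((1+2*th)*p)"
  have pq: "(1+2*th)*p*q = 1+th*p^3" unfolding q_def using assms by simp
  have "th*p^3 > 0" using assms by simp
  hence a1: "1+th*p^3 > 0" by linarith
  have a2: "(1+2*th)*p > 0" using assms by simp
  have q: "q > 0" unfolding q_def using divide_pos_pos[OF a1 a2] .
  define D where "D = p^2 - 4*q"
  have "(1+2*th)*p*D = p^3*(1-2*th) - 4" unfolding D_def using pq by algebra
  hence D: "D > 0" using assms by (smt (verit) mult_pos_pos zero_less_mult_pos)
  define u where "u = (p + sqrt D)/2"
  define v where "v = (p - sqrt D)/2"
  have sD: "sqrt D ^2 = D" "sqrt D > 0" using D by auto
  have "sqrt D < p"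
  proof -
    have "sqrt D ^2 < p^2" using sD q unfolding D_def by simp
    thus ?thesis using assms(4) sD(2) by (smt (verit) power_mono)
  qed
  hence uv: "u>0" "v>0" "u\<noteq>v" using sD(2) assms(4) unfolding u_def v_def
    by (simp_all add: field_simps add_pos_pos)
  have s: "u+v = p" unfolding u_def v_def by (simp add: field_simps)
  have "u*v = (p^2 - sqrt D^2)/4" unfolding u_def v_def by (simp add: field_simps power2_eq_square)
  hence m: "u*v = q" using sD(1) unfolding D_def by simp
  define L where "L = root 3 lam"
  have L: "L = p * r2 th (p^3)" unfolding L_def assms(6)
    by (rule real_root_pos_unique) (use assms rp in \<open>auto simp: power_mult_distrib\<close>)
  have c2: "L*((1+th)*(u+v)^3-1) = (u+v)*((u+v)^3-2)"
    using d unfolding L r2_def s by (simp add: field_simps)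
  have c1: "(1+2*th)*(u+v)*(u*v) = 1+th*(u+v)^3" using pq s m by simp
  have A: "(u^3,v^3) \<in> scwr_solutions 3 lam th"
    using core_bwd[OF uv(1,2) assms(2,3) c1 c2] sol_uv[of lam u v th] uv assms unfolding L_def by simp
  have c1': "(1+2*th)*(v+u)*(v*u) = 1+th*(v+u)^3" using c1 by (simp add: ac_simps)
  have c2': "L*((1+th)*(v+u)^3-1) = (v+u)*((v+u)^3-2)" using c2 by (simp add: ac_simps)
  have B: "(v^3,u^3) \<in> scwr_solutions 3 lam th"
    using core_bwd[OF uv(2,1) assms(2,3) c1' c2'] sol_uv[of lam v u th] uv assms unfolding L_def by simp
  show ?thesis using uv s pq m A B by blast
qed

lemma h_exists:
  fixes lam th :: real
  assumes "0<th" "th<1/2" "lam > lambda_cr3 th"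
  shows "\<exists>p>0. p^3*(1-2*th) > 4 \<and> lam = p^3 * r2 th (p^3) ^ 3"
proof -
  define t0 where "t0 = 4/(1-2*th)"
  have t0: "t0*(1-2*th) = 4" "t0 \<ge> 4" using assms unfolding t0_def by (auto simp: divide_simps)
  define T where "T = t0 + 27/8*lam"
  have lc: "lambda_cr3 th > 0" unfolding lambda_cr3_def using assms by simp
  have T: "T \<ge> t0" "T*(1-2*th) \<ge> 4" using assms lc t0 unfolding T_def
    by (auto simp: algebra_simps intro!: mult_nonneg_nonneg)
  define h where "h t = t * r2 th t ^ 3" for t
  have r0: "r2 th t0 = 2/3"
  proof -
    have e: "t0 - 2*(th*t0) = 4" using t0(1) by (simp add: algebra_simps)
    have "(1+th)*t0-1 - 3/2*(t0-2) = (4 - (t0 - 2*(th*t0)))/2" by algebra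
    hence den: "(1+th)*t0 - 1 = 3/2*(t0-2)" using e by simp
    have "t0 - 2 > 0" using t0 by simp
    thus ?thesis unfolding r2_def den by (simp add: divide_simps)
  qed
  have "h t0 = t0*(2/3)^3" unfolding h_def r0 by simp
  hence h0: "h t0 = lambda_cr3 th" unfolding lambda_cr3_def t0_def using assms
    by (simp add: field_simps)
  have rT: "r2 th T \<ge> 2/3"
  proof -
    have dT: "(1+th)*T-1 > 0" using r2_pos[of T th] T t0 assms by simp
    have "3*(T-2) - 2*((1+th)*T-1) = T*(1-2*th) - 4" by algebra
    hence "2*((1+th)*T-1) \<le> 3*(T-2)" using T by linarith
    thus ?thesis unfolding r2_def using dT by (simp add: divide_simps)
  qed
  have "h T \<ge> T * (2/3)^3" unfolding h_def using rT T t0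
    by (intro mult_left_mono power_mono) auto
  moreover have "T*(2/3)^3 \<ge> lam" unfolding T_def using t0 by (simp add: power_divide field_simps)
  ultimately have hT: "h T \<ge> lam" by linarith
  have nz: "(1+th)*t-1 \<noteq> 0" if "t \<in> {t0..T}" for t
    using r2_pos[of t th] t0 assms that by auto
  have c: "continuous_on {t0..T} h" unfolding h_def r2_def
    using nz by (auto intro!: continuous_intros)
  obtain t where tt: "t0 \<le> t" "t \<le> T" "h t = lam"
    using IVT'[of h t0 lam T] c hT h0 assms T by auto
  have "t \<noteq> t0" using tt h0 assms by auto
  hence "t > t0" using tt by simp
  hence big: "t*(1-2*th) > 4" using t0 assms by (metis mult_strict_right_mono diff_gt_0_iff_gt 
     mult.commute mult_2 mult_less_cancel_left_pos less_divide_eq_numeral1(1) one_less_numeral_iff semiring_norm(76))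
  define p where "p = root 3 t"
  have p: "p > 0" "p^3 = t" using tt t0 unfolding p_def by (auto simp: real_root_pow_pos)
  show ?thesis using p big tt unfolding h_def by auto
qed

lemma p_unique:
  fixes p1 p2 th :: real
  assumes "th>0" "p1>0" "p2>0" "p1^3*(1-2*th) > 4" "p2^3*(1-2*th) > 4"
    "p1^3 * r2 th (p1^3) ^ 3 = p2^3 * r2 th (p2^3) ^ 3"
  shows "p1 = p2"
proof -
  have *: False if "a>0" "a<b" "a^3*(1-2*th) > 4" "a^3 * r2 th (a^3) ^ 3 = b^3 * r2 th (b^3) ^ 3" for a b
  proof -
    have "a^3 > 4" using t_big[of "a^3" th] that assms by simp
    moreover have "a^3 < b^3" using that by (simp add: power_strict_mono)
    ultimately show False using h_mono[of "a^3" "b^3" th] that assms by simp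
  qed
  show ?thesis using *[of p1 p2] *[of p2 p1] assms by (cases p1 p2 rule: linorder_cases) auto
qed

lemma quad_roots:
  fixes u v u0 v0 :: real
  assumes "u+v = u0+v0" "u*v = u0*v0"
  shows "(u = u0 \<and> v = v0) \<or> (u = v0 \<and> v = u0)"
proof -
  have "(u-u0)*(u-v0) = 0" using assms by algebra
  thus ?thesis using assms by auto
qed

theorem mainTheorem7:
  fixes lam th :: real
  assumes "lam > 0" and "0 < th" and "th < 1"
  shows "(th \<ge> 1/2 \<longrightarrow> num_TISGM 3 lam th = 1)
    \<and> (th < 1/2 \<longrightarrow> lam \<le> lambda_cr3 th \<longrightarrow>
          num_TISGM 3 lam th = 1 \<and>
          scwr_solutions 3 lam th = {(x_star 3 lam th, x_star 3 lam th)})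
    \<and> (th < 1/2 \<longrightarrow> lam > lambda_cr3 th \<longrightarrow>
          num_TISGM 3 lam th = 3 \<and>
          (\<exists>x1 x2. x1 \<noteq> x2 \<and>
             scwr_solutions 3 lam th =
               {(x_star 3 lam th, x_star 3 lam th), (x1, x2), (x2, x1)}))"
proof -
  define S where "S = scwr_solutions 3 lam th"
  define a where "a = x_star 3 lam th"
  have sym: "(x,x) \<in> S \<longleftrightarrow> x = a" for x
    using sym_sol[of x lam th] x_star_prop[OF assms] unfolding S_def a_def by blast
  have single: "S = {(a,a)}" if nd: "\<And>x y. (x,y) \<in> S \<Longrightarrow> x = y"
  proof
    show "S \<subseteq> {(a,a)}"
    proof
      fix z assume z: "z \<in> S"
      obtain x y where xy: "z = (x,y)" by fastforce
      hence "x = y" using nd z by blast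
      thus "z \<in> {(a,a)}" using sym z xy by auto
    qed
    show "{(a,a)} \<subseteq> S" using sym by auto
  qed
  have P1: "num_TISGM 3 lam th = 1" if "th \<ge> 1/2"
  proof -
    have "x = y" if "(x,y) \<in> S" for x y
    proof (rule ccontr)
      assume "x \<noteq> y"
      then obtain p where p: "p>0" "p^3*(1-2*th) > 4"
        using fwd[OF assms] \<open>(x,y) \<in> S\<close> unfolding S_def by blast
      have "p^3 > 0" using p by simp
      moreover have "1-2*th \<le> 0" using \<open>th \<ge> 1/2\<close> by simp
      ultimately have "p^3*(1-2*th) \<le> 0" by (simp add: mult_nonneg_nonpos)
      thus False using p by simp
    qed
    thus ?thesis using single unfolding num_TISGM_def S_def by simp
  qed
  have P2: "num_TISGM 3 lam th = 1 \<and> scwr_solutions 3 lam th = {(a,a)}"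
    if "th < 1/2" "lam \<le> lambda_cr3 th"
  proof -
    have "x = y" if "(x,y) \<in> S" for x y
    proof (rule ccontr)
      assume "x \<noteq> y"
      then obtain p where p: "p>0" "p^3*(1-2*th) > 4" "lam = p^3 * r2 th (p^3) ^ 3"
        using fwd[OF assms] \<open>(x,y) \<in> S\<close> unfolding S_def by blast
      have "p^3 * r2 th (p^3) ^ 3 > lambda_cr3 th"
        using h_crit[of "p^3" th] p assms \<open>th < 1/2\<close> by simp
      thus False using p \<open>lam \<le> lambda_cr3 th\<close> by simp
    qed
    thus ?thesis using single unfolding num_TISGM_def S_def by simp
  qed
  have P3: "num_TISGM 3 lam th = 3 \<and> (\<exists>x1 x2. x1 \<noteq> x2 \<and> scwr_solutions 3 lam th = {(a,a), (x1, x2), (x2, x1)})"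
    if th2: "th < 1/2" and lc: "lam > lambda_cr3 th"
  proof -
    obtain p0 where p0: "p0>0" "p0^3*(1-2*th) > 4" "lam = p0^3 * r2 th (p0^3) ^ 3"
      using h_exists[OF assms(2) th2 lc] by blast
    obtain u0 v0 where uv0: "u0>0" "v0>0" "u0 \<noteq> v0" "u0+v0 = p0" "(1+2*th)*p0*(u0*v0) = 1+th*p0^3"
       "(u0^3,v0^3) \<in> S" "(v0^3,u0^3) \<in> S"
      using bwd[OF assms p0] unfolding S_def by blast
    have ne: "u0^3 \<noteq> v0^3" using cube_eq_pos[of u0 v0] uv0 by simp
    have Seq: "S = {(a,a), (u0^3,v0^3), (v0^3,u0^3)}"
    proof
      show "{(a,a), (u0^3,v0^3), (v0^3,u0^3)} \<subseteq> S" using sym uv0 by auto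
      show "S \<subseteq> {(a,a), (u0^3,v0^3), (v0^3,u0^3)}"
      proof
        fix z assume z: "z \<in> S"
        obtain x y where xy: "z = (x,y)" by fastforce
        show "z \<in> {(a,a), (u0^3,v0^3), (v0^3,u0^3)}"
        proof (cases "x = y")
          case True thus ?thesis using sym z xy by auto
        next
          case False
          have xy0: "x>0" "y>0" using z xy unfolding S_def scwr_solutions_def by auto
          obtain p where p: "p>0" "p^3*(1-2*th) > 4" "lam = p^3 * r2 th (p^3) ^ 3"
             "root 3 x + root 3 y = p" "(1+2*th)*p*(root 3 x * root 3 y) = 1 + th*p^3"
            using fwd[OF assms, of x y] z xy False unfolding S_def by blast
          have "p = p0" using p_unique[of th p p0] p p0 assms by simp
          hence e1: "root 3 x + root 3 y = u0 + v0" using p uv0 by simp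
          have "((1+2*th)*p0)*(root 3 x * root 3 y) = ((1+2*th)*p0)*(u0*v0)"
            using p uv0 \<open>p = p0\<close> by simp
          moreover have "(1+2*th)*p0 \<noteq> 0" using assms p0 by simp
          ultimately have e2: "root 3 x * root 3 y = u0*v0" by simp
          have rx: "root 3 x ^ 3 = x" "root 3 y ^ 3 = y" using xy0 by (auto simp: real_root_pow_pos)
          from quad_roots[OF e1 e2] have "(x = u0^3 \<and> y = v0^3) \<or> (x = v0^3 \<and> y = u0^3)"
            using rx by metis
          thus ?thesis using xy by auto
        qed
      qed
    qed
    have "card S = 3" unfolding Seq using ne by auto
    thus ?thesis using Seq ne unfolding num_TISGM_def S_def by blast
  qed
  show ?thesis using P1 P2 P3 unfolding a_def by blast
qed

end
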